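(* Let $C_T$ be the following class of four continuous maps of finite topological spaces: the constant map $\{a\leftrightarrow b\}\to\{*\}$; the constant map $\{a\searrow b\}\to\{*\}$; the inclusion $\{b\}\to\{a\searrow b\}$ of the closed point; and the constant map $\{a\swarrow o\searrow b\}\to\{*\}$. Then a Hausdorff topological space $K$ is compact iff the map $K\to\{*\}$ lies in $C_T^{lr}$.
   Context: For morphisms $f:A\to B$ and $g:X\to Y$ in a category, write $f\rightthreetimes g$ ("$f$ has the left lifting property with respect to $g$") if for all morphisms $i:A\to X$, $j:B\to Y$ with $g\circ i=j\circ f$ there exists a morphism $h:B\to X$ with $h\circ f=i$ and $g\circ h=j$. For a class $C$ of morphisms, $C^l=\{f:\ f\rightthreetimes g\text{ for all }g\in C\}$, $C^r=\{g:\ f\rightthreetimes g\text{ for all }f\in C\}$, $C^{lr}=(C^l)^r$. Finite spaces: $\{*\}$ one point; $\{a\leftrightarrow b\}$ the antidiscrete two-point space; $\{a\searrow b\}$ the Sierpiński space with open sets $\emptyset,\{a\},\{a,b\}$; $\{a\swarrow o\searrow b\}$ the three-point space with points $a,o,b$ and open sets $\emptyset,\{o\},\{o,a\},\{o,b\},\{a,o,b\}$ (so $o$ is open and $a,b$ are closed points in the closure of $o$). *)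

theory Defs
  imports "HOL-Analysis.Analysis"
begin

text \<open>Morphisms of Top are continuous maps; two maps are equal as morphisms
  if they agree on the topspace of their domain.\<close>

definition llp ::
  "'a topology \<Rightarrow> 'b topology \<Rightarrow> ('a \<Rightarrow> 'b) \<Rightarrow> 'c topology \<Rightarrow> 'd topology \<Rightarrow> ('c \<Rightarrow> 'd) \<Rightarrow> bool"
  where
  "llp A B f X Y g \<longleftrightarrow>
    (\<forall>i j. continuous_map A X i \<and> continuous_map B Y j \<and>
           (\<forall>a\<in>topspace A. g (i a) = j (f a)) \<longrightarrow>
        (\<exists>h. continuous_map B X h \<and> (\<forall>a\<in>topspace A. h (f a) = i a) \<and>
             (\<forall>b\<in>topspace B. g (h b) = j b)))"

datatype fpt = Pa | Pb | Po

definition pt :: "unit topology" where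
  "pt = discrete_topology {()}"

definition antidiscr :: "fpt topology" where
  "antidiscr = topology (\<lambda>U. U = {} \<or> U = {Pa, Pb})"

definition sierp :: "fpt topology" where
  "sierp = topology (\<lambda>U. U = {} \<or> U = {Pa} \<or> U = {Pa, Pb})"

definition closedpt :: "fpt topology" where
  "closedpt = topology (\<lambda>U. U \<subseteq> {Pb})"

definition threept :: "fpt topology" where
  "threept = topology (\<lambda>U. U = {} \<or> U = {Po} \<or> U = {Po, Pa} \<or> U = {Po, Pb} \<or> U = {Pa, Po, Pb})"

definition in_CT_l :: "'a topology \<Rightarrow> 'b topology \<Rightarrow> ('a \<Rightarrow> 'b) \<Rightarrow> bool" where
  "in_CT_l A B f \<longleftrightarrow> continuous_map A B f \<and>
     llp A B f antidiscr pt (\<lambda>_. ()) \<and>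
     llp A B f sierp pt (\<lambda>_. ()) \<and>
     llp A B f closedpt sierp (\<lambda>x. x) \<and>
     llp A B f threept pt (\<lambda>_. ())"

text \<open>Membership of g : X -> Y in C_T^lr, where the class C_T^l is taken over
  all continuous maps between spaces carried by the types 'a and 'b.\<close>
definition in_CT_lr :: "'a itself \<Rightarrow> 'b itself \<Rightarrow> 'c topology \<Rightarrow> 'd topology \<Rightarrow> ('c \<Rightarrow> 'd) \<Rightarrow> bool" where
  "in_CT_lr (_::'a itself) (_::'b itself) X Y g \<longleftrightarrow> continuous_map X Y g \<and>
     (\<forall>(A::'a topology) (B::'b topology) f. in_CT_l A B f \<longrightarrow> llp A B f X Y g)"




lemma fpt_UNIV: "UNIV = {Pa,Pb,Po}" using fpt.exhaust by auto
lemma fpt_sub: "U = {x\<in>{Pa,Pb,Po}. x \<in> U}" using fpt.exhaust by auto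
lemma e1: "(U = {} \<or> U = {Pa, Pb}) \<longleftrightarrow> (Po \<notin> U \<and> (Pa \<in> U \<longleftrightarrow> Pb \<in> U))"
  apply (subst (1 2) fpt_sub) by (auto, (metis fpt.exhaust)+)
lemma e2: "(U = {} \<or> U = {Pa} \<or> U = {Pa, Pb}) \<longleftrightarrow> (Po \<notin> U \<and> (Pb \<in> U \<longrightarrow> Pa \<in> U))"
  apply (subst (1 2 3) fpt_sub) by (auto, (metis fpt.exhaust)+)
lemma e3: "(U = {} \<or> U = {Po} \<or> U = {Po, Pa} \<or> U = {Po, Pb} \<or> U = {Pa, Po, Pb}) \<longleftrightarrow> ((Pa \<in> U \<longrightarrow> Po \<in> U) \<and> (Pb \<in> U \<longrightarrow> Po \<in> U))"
  apply (subst (1 2 3 4 5) fpt_sub) by (auto, (metis fpt.exhaust)+)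
lemma istopology_antidiscr: "istopology (\<lambda>U. U = {} \<or> U = {Pa, Pb})"
  unfolding e1 istopology_def by blast
lemma istopology_sierp: "istopology (\<lambda>U. U = {} \<or> U = {Pa} \<or> U = {Pa, Pb})"
  unfolding e2 istopology_def by blast
lemma istopology_closedpt: "istopology (\<lambda>U. U \<subseteq> {Pb})"
  unfolding istopology_def by auto
lemma istopology_threept: "istopology (\<lambda>U. U = {} \<or> U = {Po} \<or> U = {Po, Pa} \<or> U = {Po, Pb} \<or> U = {Pa, Po, Pb})"
  unfolding e3 istopology_def by blast

lemma openin_antidiscr: "openin antidiscr U \<longleftrightarrow> U = {} \<or> U = {Pa, Pb}"
  unfolding antidiscr_def using istopology_antidiscr by simp
lemma openin_sierp: "openin sierp U \<longleftrightarrow> U = {} \<or> U = {Pa} \<or> U = {Pa, Pb}"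
  unfolding sierp_def using istopology_sierp by simp
lemma openin_closedpt: "openin closedpt U \<longleftrightarrow> U \<subseteq> {Pb}"
  unfolding closedpt_def using istopology_closedpt by simp
lemma openin_threept: "openin threept U \<longleftrightarrow> U = {} \<or> U = {Po} \<or> U = {Po, Pa} \<or> U = {Po, Pb} \<or> U = {Pa, Po, Pb}"
  unfolding threept_def using istopology_threept by simp

end

theory Submission
  imports Defs
begin


lemma llpD: "llp A B f X Y g \<Longrightarrow> continuous_map A X i \<Longrightarrow> continuous_map B Y j \<Longrightarrow> (\<forall>a\<in>topspace A. g (i a) = j (f a))
  \<Longrightarrow> \<exists>h. continuous_map B X h \<and> (\<forall>a\<in>topspace A. h (f a) = i a) \<and> (\<forall>b\<in>topspace B. g (h b) = j b)"
  unfolding llp_def by blast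
lemma cmapD: "continuous_map X Y f \<Longrightarrow> x \<in> topspace X \<Longrightarrow> f x \<in> topspace Y"
  unfolding continuous_map_def by blast
lemma cmapO: "continuous_map X Y f \<Longrightarrow> openin Y U \<Longrightarrow> openin X {x \<in> topspace X. f x \<in> U}"
  unfolding continuous_map_def by blast

lemma top_pt: "topspace pt = {()}" by (simp add: pt_def)
lemma top_antidiscr: "topspace antidiscr = {Pa,Pb}"
  unfolding topspace_def openin_antidiscr by auto
lemma top_sierp: "topspace sierp = {Pa,Pb}"
  unfolding topspace_def openin_sierp by auto
lemma top_closedpt: "topspace closedpt = {Pb}"
  unfolding topspace_def openin_closedpt by auto
lemma top_threept: "topspace threept = {Pa,Po,Pb}"
  unfolding topspace_def openin_threept by auto

lemma cont_pt: "continuous_map X pt (\<lambda>_. ())"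
  by (simp add: top_pt)

lemma dense_lem:
  assumes "in_CT_l A B f" "openin B V" "b \<in> V"
  shows "\<exists>a\<in>topspace A. f a \<in> V"
proof (rule ccontr)
  assume na: "\<not> ?thesis"
  have bB: "b \<in> topspace B" using openin_subset[OF assms(2)] assms(3) by blast
  have L: "llp A B f closedpt sierp (\<lambda>x. x)" using assms(1) unfolding in_CT_l_def by blast
  have ci: "continuous_map A closedpt (\<lambda>_. Pb)" by (simp add: top_closedpt)
  have cj: "continuous_map B sierp (\<lambda>x. if x \<in> V then Pa else Pb)"
    unfolding continuous_map_def top_sierp openin_sierp
  proof (intro conjI allI impI)
    show "(\<lambda>x. if x \<in> V then Pa else Pb) \<in> topspace B \<rightarrow> {Pa, Pb}" by auto
    fix U :: "fpt set" assume U: "U = {} \<or> U = {Pa} \<or> U = {Pa, Pb}"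
    have e1: "{x \<in> topspace B. (if x \<in> V then Pa else Pb) \<in> {Pa}} = V"
      using openin_subset[OF assms(2)] by auto
    have e2: "{x \<in> topspace B. (if x \<in> V then Pa else Pb) \<in> {Pa,Pb}} = topspace B"
      by auto
    have e0: "{x \<in> topspace B. (if x \<in> V then Pa else Pb) \<in> {}} = {}" by auto
    show "openin B {x \<in> topspace B. (if x \<in> V then Pa else Pb) \<in> U}"
      using U
    proof (elim disjE)
      assume "U = {}" then show ?thesis using e0 openin_empty by (simp only:)
    next
      assume "U = {Pa}" then show ?thesis using e1 assms(2) by (simp only:)
    next
      assume "U = {Pa,Pb}" then show ?thesis using e2 openin_topspace by (simp only:)
    qed
  qed
  have eq: "\<forall>a\<in>topspace A. Pb = (if f a \<in> V then Pa else Pb)" using na by auto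
  obtain h where h: "continuous_map B closedpt h" "\<forall>b\<in>topspace B. h b = (if b \<in> V then Pa else Pb)"
    using llpD[OF L ci cj eq] by blast
  have "h b \<in> {Pb}" using cmapD[OF h(1) bB] top_closedpt by simp
  with h(2) bB assms(3) show False by auto
qed

lemma sep_lem:
  assumes "in_CT_l A B f" "closedin A F1" "closedin A F2" "F1 \<inter> F2 = {}" "b \<in> topspace B"
  shows "\<exists>V. openin B V \<and> b \<in> V \<and> ((\<forall>a\<in>topspace A. f a \<in> V \<longrightarrow> a \<notin> F1) \<or> (\<forall>a\<in>topspace A. f a \<in> V \<longrightarrow> a \<notin> F2))"
proof -
  have L: "llp A B f threept pt (\<lambda>_. ())" using assms(1) unfolding in_CT_l_def by blast
  define i where "i = (\<lambda>a. if a \<in> F1 then Pa else if a \<in> F2 then Pb else Po)"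
  have o1: "openin A (topspace A - F1)" "openin A (topspace A - F2)"
     "openin A (topspace A - F1 - F2)" using assms(2,3) by auto
  have ci: "continuous_map A threept i"
    unfolding continuous_map_def top_threept openin_threept
  proof (intro conjI allI impI)
    show "i \<in> topspace A \<rightarrow> {Pa, Po, Pb}" unfolding i_def by auto
    fix U :: "fpt set" assume U: "U = {} \<or> U = {Po} \<or> U = {Po, Pa} \<or> U = {Po, Pb} \<or> U = {Pa, Po, Pb}"
    have e1: "{x \<in> topspace A. i x \<in> {Po}} = topspace A - F1 - F2" unfolding i_def by auto
    have e2: "{x \<in> topspace A. i x \<in> {Po,Pa}} = topspace A - F2" unfolding i_def using assms(4) by auto
    have e3: "{x \<in> topspace A. i x \<in> {Po,Pb}} = topspace A - F1" unfolding i_def using assms(4) by auto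
    have e4: "{x \<in> topspace A. i x \<in> {Pa,Po,Pb}} = topspace A" unfolding i_def by auto
    have e0: "{x \<in> topspace A. i x \<in> {}} = {}" by auto
    show "openin A {x \<in> topspace A. i x \<in> U}" using U
    proof (elim disjE)
      assume "U = {}" then show ?thesis using e0 openin_empty by (simp only:)
    next
      assume "U = {Po}" then show ?thesis using e1 o1 by (simp only:)
    next
      assume "U = {Po,Pa}" then show ?thesis using e2 o1 by (simp only:)
    next
      assume "U = {Po,Pb}" then show ?thesis using e3 o1 by (simp only:)
    next
      assume "U = {Pa,Po,Pb}" then show ?thesis using e4 openin_topspace by (simp only:)
    qed
  qed
  have eq: "\<forall>a\<in>topspace A. (\<lambda>_. ()) (i a) = (\<lambda>_. ()) (f a)" by simp
  obtain h where h: "continuous_map B threept h" "\<forall>a\<in>topspace A. h (f a) = i a"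
    using llpD[OF L ci cont_pt eq] by blast
  have hb: "h b \<in> {Pa,Po,Pb}" using cmapD[OF h(1) assms(5)] top_threept by simp
  have op: "openin B {x \<in> topspace B. h x \<in> U}" if "openin threept U" for U
    using cmapO[OF h(1) that] .
  show ?thesis
  proof (cases "h b = Pa")
    case True
    let ?V = "{x \<in> topspace B. h x \<in> {Po,Pa}}"
    have "openin B ?V" using op openin_threept by blast
    moreover have "\<forall>a\<in>topspace A. f a \<in> ?V \<longrightarrow> a \<notin> F2" using h(2) assms(4) unfolding i_def by auto
    ultimately show ?thesis using True assms(5) by blast
  next
    case False
    let ?V = "{x \<in> topspace B. h x \<in> {Po,Pb}}"
    have "openin B ?V" using op openin_threept by blast
    moreover have "\<forall>a\<in>topspace A. f a \<in> ?V \<longrightarrow> a \<notin> F1" using h(2) assms(4) unfolding i_def by auto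
    ultimately show ?thesis using False hb assms(5) by blast
  qed
qed



lemma ext_lem:
  assumes K: "compact_space K" "Hausdorff_space K" and f: "in_CT_l A B f"
    and i: "continuous_map A K i"
  shows "\<exists>h. continuous_map B K h \<and> (\<forall>a\<in>topspace A. h (f a) = i a)"
proof -
  have reg: "regular_space K" using K compact_Hausdorff_imp_regular_space by blast
  have R: "\<exists>U. openin K U \<and> x \<in> U \<and> K closure_of U \<subseteq> W" if H: "openin K W" "x \<in> W" for W x
  proof -
    have "\<exists>U V. openin K U \<and> closedin K V \<and> x \<in> U \<and> U \<subseteq> V \<and> V \<subseteq> W"
      using reg H unfolding neighbourhood_base_of_closedin[symmetric] neighbourhood_base_of by blast
    then obtain U V where UV: "openin K U" "closedin K V" "x \<in> U" "U \<subseteq> V" "V \<subseteq> W" by blast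
    have "K closure_of U \<subseteq> V" using closure_of_minimal[OF UV(4) UV(2)] .
    then show ?thesis using UV by blast
  qed
  have fAB: "f a \<in> topspace B" if "a \<in> topspace A" for a
    using f that unfolding in_CT_l_def continuous_map_def by blast
  have iAK: "i a \<in> topspace K" if "a \<in> topspace A" for a
    using i that unfolding continuous_map_def by blast
  define T where "T V = i ` {a\<in>topspace A. f a \<in> V}" for V
  define Cl where "Cl b = \<Inter>{K closure_of T V | V. openin B V \<and> b \<in> V}" for b
  have TK: "T V \<subseteq> topspace K" for V unfolding T_def using iAK by auto
  have NOTIN: "k \<notin> Cl b" if H: "openin K W" "k \<in> W" "openin B V" "b \<in> V"
      "\<forall>a\<in>topspace A. f a \<in> V \<longrightarrow> i a \<notin> W" for k W V b
  proof
    assume "k \<in> Cl b"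
    then have "k \<in> K closure_of T V" unfolding Cl_def using H(3,4) by blast
    then obtain y where "y \<in> T V" "y \<in> W" using H(1,2) unfolding in_closure_of by blast
    then show False using H(5) unfolding T_def by auto
  qed
  have EX: "\<exists>k. k \<in> topspace K \<and> k \<in> Cl b" if b: "b \<in> topspace B" for b
  proof -
    let ?U = "insert (topspace K) ((\<lambda>V. K closure_of T V) ` {V. openin B V \<and> b \<in> V})"
    have cU: "\<forall>C\<in>?U. closedin K C" by auto
    have fU: "\<forall>F. finite F \<and> F \<subseteq> ?U \<longrightarrow> \<Inter>F \<noteq> {}"
      proof (intro allI impI)
        fix F assume F: "finite F \<and> F \<subseteq> ?U"
        then have "finite (F - {topspace K})" "F - {topspace K} \<subseteq> (\<lambda>V. K closure_of T V) ` {V. openin B V \<and> b \<in> V}"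
          by auto
        then obtain Vs where Vs: "Vs \<subseteq> {V. openin B V \<and> b \<in> V}" "finite Vs"
          "F - {topspace K} = (\<lambda>V. K closure_of T V) ` Vs"
          using finite_subset_image[OF _ _] by (metis (no_types, lifting))
        let ?V0 = "topspace B \<inter> \<Inter>Vs"
        have oV: "openin B ?V0" using Vs by (intro openin_Int_Inter) auto
        have bV: "b \<in> ?V0" using Vs b by auto
        obtain a where a: "a \<in> topspace A" "f a \<in> ?V0" using dense_lem[OF f oV bV] by blast
        have "i a \<in> \<Inter>F"
        proof
          fix C assume "C \<in> F"
          show "i a \<in> C"
          proof (cases "C = topspace K")
            case True then show ?thesis using iAK a by auto
          next
            case False
            then obtain V where "V \<in> Vs" "C = K closure_of T V" using Vs(3) \<open>C \<in> F\<close> by blast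
            moreover have "i a \<in> T V" unfolding T_def using a \<open>V \<in> Vs\<close> by auto
            ultimately show ?thesis using closure_of_subset[OF TK[of V]] by blast
          qed
        qed
        then show "\<Inter>F \<noteq> {}" by blast
      qed
    have "\<Inter>?U \<noteq> {}"
      using K(1) cU fU unfolding compact_space_fip by blast
    then obtain k where k: "k \<in> \<Inter>?U" by blast
    have "k \<in> topspace K" using k by simp
    moreover have "k \<in> Cl b" unfolding Cl_def
    proof
      fix C assume "C \<in> {K closure_of T V |V. openin B V \<and> b \<in> V}"
      then have "C \<in> ?U" by blast
      then show "k \<in> C" using k by (rule InterD[rotated])
    qed
    ultimately show ?thesis by blast
  qed
  have UN: "k1 = k2" if H: "k1 \<in> topspace K" "k1 \<in> Cl b" "k2 \<in> topspace K" "k2 \<in> Cl b"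
      "b \<in> topspace B" for k1 k2 b
  proof (rule ccontr)
    assume "k1 \<noteq> k2"
    then obtain U1 U2 where U: "openin K U1" "openin K U2" "k1 \<in> U1" "k2 \<in> U2" "disjnt U1 U2"
      using K(2) H unfolding Hausdorff_space_def by blast
    obtain W1 where W1: "openin K W1" "k1 \<in> W1" "K closure_of W1 \<subseteq> U1" using R[OF U(1) U(3)] by blast
    obtain W2 where W2: "openin K W2" "k2 \<in> W2" "K closure_of W2 \<subseteq> U2" using R[OF U(2) U(4)] by blast
    let ?F1 = "{a \<in> topspace A. i a \<in> K closure_of W1}"
    let ?F2 = "{a \<in> topspace A. i a \<in> K closure_of W2}"
    have c1: "closedin A ?F1" and c2: "closedin A ?F2"
      by (simp_all add: closedin_continuous_map_preimage[OF i])
    have d: "?F1 \<inter> ?F2 = {}" using W1(3) W2(3) U(5) unfolding disjnt_def by auto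
    obtain V where V: "openin B V" "b \<in> V"
      "(\<forall>a\<in>topspace A. f a \<in> V \<longrightarrow> a \<notin> ?F1) \<or> (\<forall>a\<in>topspace A. f a \<in> V \<longrightarrow> a \<notin> ?F2)"
      using sep_lem[OF f c1 c2 d H(5)] by blast
    have s1: "W1 \<subseteq> K closure_of W1" "W2 \<subseteq> K closure_of W2"
      using W1 W2 closure_of_subset openin_subset by metis+
    from V(3) show False
    proof
      assume "\<forall>a\<in>topspace A. f a \<in> V \<longrightarrow> a \<notin> ?F1"
      then have "\<forall>a\<in>topspace A. f a \<in> V \<longrightarrow> i a \<notin> W1" using s1 by auto
      then show False using NOTIN[OF W1(1,2) V(1,2)] H(2) by blast
    next
      assume "\<forall>a\<in>topspace A. f a \<in> V \<longrightarrow> a \<notin> ?F2"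
      then have "\<forall>a\<in>topspace A. f a \<in> V \<longrightarrow> i a \<notin> W2" using s1 by auto
      then show False using NOTIN[OF W2(1,2) V(1,2)] H(4) by blast
    qed
  qed
  define h where "h b = (SOME k. k \<in> topspace K \<and> k \<in> Cl b)" for b
  have hB: "h b \<in> topspace K \<and> h b \<in> Cl b" if "b \<in> topspace B" for b
    unfolding h_def using EX[OF that] by (rule someI_ex)
  have hfa: "h (f a) = i a" if a: "a \<in> topspace A" for a
  proof -
    have "i a \<in> Cl (f a)"
      unfolding Cl_def
    proof
      fix C assume "C \<in> {K closure_of T V |V. openin B V \<and> f a \<in> V}"
      then obtain V where "C = K closure_of T V" "f a \<in> V" by blast
      moreover have "i a \<in> T V" unfolding T_def using a \<open>f a \<in> V\<close> by auto
      ultimately show "i a \<in> C" using closure_of_subset[OF TK[of V]] by blast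
    qed
    then show ?thesis using UN[of "h (f a)" "f a" "i a"] hB[OF fAB[OF a]] iAK[OF a] fAB[OF a] by blast
  qed
  have "continuous_map B K h"
    unfolding continuous_map_def
  proof (intro conjI allI impI)
    show "h \<in> topspace B \<rightarrow> topspace K" unfolding Pi_iff using hB by blast
    fix W assume W: "openin K W"
    show "openin B {x \<in> topspace B. h x \<in> W}"
    proof (subst openin_subopen, intro ballI)
      fix b assume "b \<in> {x \<in> topspace B. h x \<in> W}"
      then have b: "b \<in> topspace B" "h b \<in> W" by auto
      obtain W' where W': "openin K W'" "h b \<in> W'" "K closure_of W' \<subseteq> W" using R[OF W b(2)] by blast
      obtain W'' where W'': "openin K W''" "h b \<in> W''" "K closure_of W'' \<subseteq> W'" using R[OF W'(1,2)] by blast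
      let ?F1 = "{a \<in> topspace A. i a \<in> topspace K - W'}"
      let ?F2 = "{a \<in> topspace A. i a \<in> K closure_of W''}"
      have c1: "closedin A ?F1" by (rule closedin_continuous_map_preimage[OF i closedin_diff[OF closedin_topspace W'(1)]])
      have c2: "closedin A ?F2" by (simp add: closedin_continuous_map_preimage[OF i])
      have d: "?F1 \<inter> ?F2 = {}" using W''(3) by blast
      obtain V where V: "openin B V" "b \<in> V"
        "(\<forall>a\<in>topspace A. f a \<in> V \<longrightarrow> a \<notin> ?F1) \<or> (\<forall>a\<in>topspace A. f a \<in> V \<longrightarrow> a \<notin> ?F2)"
        using sep_lem[OF f c1 c2 d b(1)] by blast
      have s1: "W'' \<subseteq> K closure_of W''"
        by (rule closure_of_subset[OF openin_subset[OF W''(1)]])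
      have "\<forall>a\<in>topspace A. f a \<in> V \<longrightarrow> a \<notin> ?F1"
      proof (rule ccontr)
        assume "\<not> (\<forall>a\<in>topspace A. f a \<in> V \<longrightarrow> a \<notin> ?F1)"
        then have "\<forall>a\<in>topspace A. f a \<in> V \<longrightarrow> a \<notin> ?F2" using V(3) by blast
        then have "\<forall>a\<in>topspace A. f a \<in> V \<longrightarrow> i a \<notin> W''" using s1 by blast
        then show False using NOTIN[OF W''(1,2) V(1,2)] hB[OF b(1)] by blast
      qed
      then have "T V \<subseteq> W'" unfolding T_def using iAK by blast
      have cl: "K closure_of T V \<subseteq> W" by (rule order_trans[OF closure_of_mono[OF \<open>T V \<subseteq> W'\<close>] W'(3)])
      have "V \<subseteq> {x \<in> topspace B. h x \<in> W}"
      proof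
        fix b' assume "b' \<in> V"
        then have b': "b' \<in> topspace B" using openin_subset[OF V(1)] by blast
        then have "h b' \<in> Cl b'" using hB[OF b'] by blast
        then have "h b' \<in> K closure_of T V" unfolding Cl_def using V(1) \<open>b' \<in> V\<close> by blast
        then show "b' \<in> {x \<in> topspace B. h x \<in> W}" using cl b' by blast
      qed
      then show "\<exists>T. openin B T \<and> b \<in> T \<and> T \<subseteq> {x \<in> topspace B. h x \<in> W}" using V by blast
    qed
  qed
  then show ?thesis using hfa by blast
qed


lemma foo:
  assumes nc: "\<not> compact_space (K::'k topology)"
  shows "\<exists>\<C>. (\<forall>U\<in>\<C>. openin K U) \<and> topspace K \<subseteq> \<Union>\<C> \<and>
    (\<forall>F. finite F \<and> F \<subseteq> \<C> \<longrightarrow> \<not> topspace K \<subseteq> \<Union>F)"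
proof -
  have "\<not> compactin K (topspace K)" using nc unfolding compact_space_def .
  then have "\<not> (\<forall>\<U>. (\<forall>U \<in> \<U>. openin K U) \<and> topspace K \<subseteq> \<Union>\<U>
          \<longrightarrow> (\<exists>\<F>. finite \<F> \<and> \<F> \<subseteq> \<U> \<and> topspace K \<subseteq> \<Union>\<F>))"
    unfolding compactin_def by (simp only: subset_refl simp_thms)
  then show ?thesis by (simp only: not_all not_imp not_ex de_Morgan_conj) meson
qed


lemma noncompact_filter:
  assumes nc: "\<not> compact_space K"
  obtains M where "\<forall>V\<in>M. openin K V" "topspace K \<in> M"
    "\<forall>V W. V\<in>M \<longrightarrow> W\<in>M \<longrightarrow> V\<inter>W \<in> M"
    "\<forall>V W. V\<in>M \<longrightarrow> openin K W \<longrightarrow> V\<subseteq>W \<longrightarrow> W\<in>M" "{} \<notin> M"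
    "\<forall>V W. openin K V \<longrightarrow> openin K W \<longrightarrow> V \<union> W = topspace K \<longrightarrow> V\<in>M \<or> W\<in>M"
    "\<forall>k\<in>topspace K. \<exists>V. openin K V \<and> k \<in> V \<and> V \<notin> M"
proof -
  obtain \<C> where C: "\<forall>U\<in>\<C>. openin K U" "topspace K \<subseteq> \<Union>\<C>"
    "\<forall>F. finite F \<and> F \<subseteq> \<C> \<longrightarrow> \<not> topspace K \<subseteq> \<Union>F"
    using foo[OF nc] by blast
  define I where "I = {V. openin K V \<and> (\<exists>F. finite F \<and> F \<subseteq> \<C> \<and> V \<subseteq> \<Union>F)}"
  define isF where "isF M \<longleftrightarrow> (\<forall>V\<in>M. openin K V) \<and> topspace K \<in> M \<and>
     (\<forall>V W. V\<in>M \<longrightarrow> W\<in>M \<longrightarrow> V\<inter>W\<in>M) \<and> (\<forall>V W. V\<in>M \<longrightarrow> openin K W \<longrightarrow> V\<subseteq>W \<longrightarrow> W\<in>M) \<and> M \<inter> I = {}" for M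
  define \<A> where "\<A> = {M. isF M}"
  have topI: "topspace K \<notin> I" using C(3) unfolding I_def by blast
  have F0: "isF {topspace K}" unfolding isF_def using topI by (auto dest: openin_subset)
  have zc: "\<forall>Ch\<in>chains \<A>. \<exists>U\<in>\<A>. \<forall>X\<in>Ch. X \<subseteq> U"
  proof
    fix Ch assume Ch: "Ch \<in> chains \<A>"
    show "\<exists>U\<in>\<A>. \<forall>X\<in>Ch. X \<subseteq> U"
    proof (cases "Ch = {}")
      case True then show ?thesis using F0 unfolding \<A>_def by blast
    next
      case False
      have sub: "\<And>X. X \<in> Ch \<Longrightarrow> isF X" using Ch unfolding chains_def \<A>_def by blast
      have ch: "\<And>X Y. X\<in>Ch \<Longrightarrow> Y\<in>Ch \<Longrightarrow> X \<subseteq> Y \<or> Y \<subseteq> X"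
        using Ch unfolding chains_def chain_subset_def by blast
      have s1: "openin K V" if "X \<in> Ch" "V \<in> X" for X V
        using sub[OF that(1)] that(2) unfolding isF_def by blast
      have s2: "topspace K \<in> X" if "X \<in> Ch" for X
        using sub[OF that(1)] unfolding isF_def by blast
      have s3: "V \<inter> W \<in> X" if "X \<in> Ch" "V \<in> X" "W \<in> X" for X V W
        using sub[OF that(1)] that(2,3) unfolding isF_def by blast
      have s4: "W \<in> X" if "X \<in> Ch" "V \<in> X" "openin K W" "V \<subseteq> W" for X V W
        using sub[OF that(1)] that(2-4) unfolding isF_def by blast
      have s5: "X \<inter> I = {}" if "X \<in> Ch" for X
        using sub[OF that(1)] unfolding isF_def by blast
      have "isF (\<Union>Ch)" unfolding isF_def
      proof (intro conjI allI impI ballI)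
        fix V assume "V \<in> \<Union>Ch" then show "openin K V" using s1 by blast
      next
        obtain X where "X \<in> Ch" using False by blast
        then show "topspace K \<in> \<Union>Ch" using s2 by blast
      next
        fix V W assume "V \<in> \<Union>Ch" "W \<in> \<Union>Ch"
        then obtain X Y where XY: "X\<in>Ch" "Y\<in>Ch" "V\<in>X" "W\<in>Y" by blast
        show "V \<inter> W \<in> \<Union>Ch"
        proof (cases "X \<subseteq> Y")
          case True then have "V \<inter> W \<in> Y" using s3[OF XY(2) _ XY(4)] XY(3) by blast
          then show ?thesis using XY(2) by blast
        next
          case False then have "Y \<subseteq> X" using ch XY by blast
          then have "V \<inter> W \<in> X" using s3[OF XY(1) XY(3)] XY(4) by blast
          then show ?thesis using XY(1) by blast
        qed
      next
        fix V W assume "V \<in> \<Union>Ch" "openin K W" "V \<subseteq> W"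
        then obtain X where "X \<in> Ch" "V \<in> X" by blast
        then have "W \<in> X" using s4 \<open>openin K W\<close> \<open>V \<subseteq> W\<close> by blast
        then show "W \<in> \<Union>Ch" using \<open>X \<in> Ch\<close> by blast
      next
        show "\<Union>Ch \<inter> I = {}" using s5 by blast
      qed
      then show ?thesis unfolding \<A>_def by blast
    qed
  qed
  obtain M where M: "M \<in> \<A>" and Mmax: "\<forall>X\<in>\<A>. M \<subseteq> X \<longrightarrow> X = M"
    using Zorn_Lemma2[OF zc] by blast
  have FM: "isF M" using M unfolding \<A>_def by blast
  have FM1: "\<forall>V\<in>M. openin K V" using FM unfolding isF_def by blast
  have FM2: "topspace K \<in> M" using FM unfolding isF_def by blast
  have FM3: "\<forall>V W. V\<in>M \<longrightarrow> W\<in>M \<longrightarrow> V\<inter>W\<in>M" using FM unfolding isF_def by blast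
  have FM4: "\<forall>V W. V\<in>M \<longrightarrow> openin K W \<longrightarrow> V\<subseteq>W \<longrightarrow> W\<in>M" using FM unfolding isF_def by blast
  have FM5: "M \<inter> I = {}" using FM unfolding isF_def by blast
  have ext: "\<exists>Q\<in>M. \<exists>W\<in>I. Q \<inter> V \<subseteq> W" if V: "openin K V" "V \<notin> M" for V
  proof (rule ccontr)
    assume na: "\<not> ?thesis"
    define M1 where "M1 = {W. openin K W \<and> (\<exists>Q\<in>M. Q \<inter> V \<subseteq> W)}"
    have "M \<subseteq> M1" unfolding M1_def using FM1 FM2 by blast
    moreover have "V \<in> M1" unfolding M1_def using V FM2 by blast
    moreover have "isF M1" unfolding isF_def
    proof (intro conjI allI impI ballI)
      show "\<And>W. W \<in> M1 \<Longrightarrow> openin K W" unfolding M1_def by blast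
      show "topspace K \<in> M1" unfolding M1_def using FM2 openin_topspace[of K] by blast
    next
      fix W1 W2 assume "W1 \<in> M1" "W2 \<in> M1"
      then obtain Q1 Q2 where Q: "openin K W1" "openin K W2" "Q1\<in>M" "Q2\<in>M" "Q1 \<inter> V \<subseteq> W1" "Q2 \<inter> V \<subseteq> W2"
        unfolding M1_def by blast
      have "Q1 \<inter> Q2 \<in> M" using Q FM3 by blast
      moreover have "(Q1 \<inter> Q2) \<inter> V \<subseteq> W1 \<inter> W2" using Q by blast
      moreover have "openin K (W1 \<inter> W2)" using Q(1,2) by (rule openin_Int)
      ultimately show "W1 \<inter> W2 \<in> M1" unfolding M1_def by blast
    next
      fix W1 W2 assume "W1 \<in> M1" "openin K W2" "W1 \<subseteq> W2"
      then show "W2 \<in> M1" unfolding M1_def by blast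
    next
      show "M1 \<inter> I = {}" using na unfolding M1_def by blast
    qed
    ultimately have "M1 = M" using Mmax unfolding \<A>_def by blast
    then show False using \<open>V \<in> M1\<close> V by blast
  qed
  have unI: "W1 \<union> W2 \<in> I" if H: "W1 \<in> I" "W2 \<in> I" for W1 W2
  proof -
    obtain F1 F2 where "finite F1" "F1 \<subseteq> \<C>" "W1 \<subseteq> \<Union>F1" "finite F2" "F2 \<subseteq> \<C>" "W2 \<subseteq> \<Union>F2" "openin K W1" "openin K W2"
      using H unfolding I_def by blast
    moreover have "openin K (W1 \<union> W2)" using \<open>openin K W1\<close> \<open>openin K W2\<close> by (rule openin_Un)
    ultimately show ?thesis unfolding I_def by (intro CollectI conjI exI[of _ "F1 \<union> F2"]) auto
  qed
  have downI: "Q \<in> I" if H: "W \<in> I" "Q \<subseteq> W" "openin K Q" for Q W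
    using H unfolding I_def by blast
  show ?thesis
  proof (rule that)
    show "\<forall>V\<in>M. openin K V" "topspace K \<in> M"
       "\<forall>V W. V\<in>M \<longrightarrow> W\<in>M \<longrightarrow> V\<inter>W \<in> M"
       "\<forall>V W. V\<in>M \<longrightarrow> openin K W \<longrightarrow> V\<subseteq>W \<longrightarrow> W\<in>M" using FM1 FM2 FM3 FM4 by blast+
    have "{} \<in> I" unfolding I_def using openin_empty[of K] by blast
    then show "{} \<notin> M" using FM5 by blast
    show "\<forall>V W. openin K V \<longrightarrow> openin K W \<longrightarrow> V \<union> W = topspace K \<longrightarrow> V\<in>M \<or> W\<in>M"
    proof (intro allI impI)
      fix V W assume VW: "openin K V" "openin K W" "V \<union> W = topspace K"
      show "V\<in>M \<or> W\<in>M"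
      proof (rule ccontr)
        assume "\<not> (V\<in>M \<or> W\<in>M)"
        then have nV: "V \<notin> M" and nW: "W \<notin> M" by auto
        obtain Q1 W1 where "Q1\<in>M" "W1\<in>I" "Q1 \<inter> V \<subseteq> W1" using ext[OF VW(1) nV] by blast
        moreover obtain Q2 W2 where "Q2\<in>M" "W2\<in>I" "Q2 \<inter> W \<subseteq> W2" using ext[OF VW(2) nW] by blast
        ultimately have Q: "Q1\<in>M" "W1\<in>I" "Q1 \<inter> V \<subseteq> W1" "Q2\<in>M" "W2\<in>I" "Q2 \<inter> W \<subseteq> W2" by blast+
        have OM: "Q1 \<inter> Q2 \<in> M" using Q FM3 by blast
        have oo: "openin K (Q1 \<inter> Q2)" using OM FM1 by blast
        have "Q1 \<inter> Q2 \<subseteq> W1 \<union> W2" using Q VW(3) openin_subset[OF oo] by blast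
        then have "Q1 \<inter> Q2 \<in> I" using downI[OF unI[OF Q(2) Q(5)] _ oo] by blast
        then show False using OM FM5 by blast
      qed
    qed
    show "\<forall>k\<in>topspace K. \<exists>V. openin K V \<and> k \<in> V \<and> V \<notin> M"
    proof
      fix k assume "k \<in> topspace K"
      then obtain C where "C \<in> \<C>" "k \<in> C" using C(2) by blast
      moreover have "C \<in> I" unfolding I_def using \<open>C \<in> \<C>\<close> C(1) by (blast intro: exI[of _ "{C}"])
      ultimately show "\<exists>V. openin K V \<and> k \<in> V \<and> V \<notin> M" using C(1) FM5 by blast
    qed
  qed
qed


lemma dir2:
  fixes K :: "'k topology"
  assumes H: "in_CT_lr TYPE('k) TYPE('k option) K pt (\<lambda>_. ())"
  shows "compact_space K"
proof (rule ccontr)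
  assume nc: "\<not> compact_space K"
  obtain M where M: "\<forall>V\<in>M. openin K V" "topspace K \<in> M"
    "\<forall>V W. V\<in>M \<longrightarrow> W\<in>M \<longrightarrow> V\<inter>W \<in> M"
    "\<forall>V W. V\<in>M \<longrightarrow> openin K W \<longrightarrow> V\<subseteq>W \<longrightarrow> W\<in>M" "{} \<notin> M"
    "\<forall>V W. openin K V \<longrightarrow> openin K W \<longrightarrow> V \<union> W = topspace K \<longrightarrow> V\<in>M \<or> W\<in>M"
    "\<forall>k\<in>topspace K. \<exists>V. openin K V \<and> k \<in> V \<and> V \<notin> M"
    using noncompact_filter[OF nc] by blast
  define OB where "OB S \<longleftrightarrow> S \<subseteq> insert None (Some ` topspace K) \<and> openin K (Some -` S) \<and> (None \<in> S \<longrightarrow> Some -` S \<in> M)" for S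
  have isT: "istopology OB"
    unfolding istopology_def
  proof (intro conjI allI impI)
    fix S T assume ST: "OB S" "OB T"
    show "OB (S \<inter> T)" unfolding OB_def
    proof (intro conjI impI)
      show "S \<inter> T \<subseteq> insert None (Some ` topspace K)" using ST unfolding OB_def by blast
      have "Some -` (S \<inter> T) = Some -` S \<inter> Some -` T" by auto
      then show "openin K (Some -` (S \<inter> T))" using ST unfolding OB_def by auto
      assume "None \<in> S \<inter> T"
      then show "Some -` (S \<inter> T) \<in> M" using ST M(3) \<open>Some -` (S \<inter> T) = Some -` S \<inter> Some -` T\<close> unfolding OB_def by auto
    qed
  next
    fix \<K> assume KK: "\<forall>S\<in>\<K>. OB S"
    show "OB (\<Union>\<K>)" unfolding OB_def
    proof (intro conjI impI)
      show "\<Union>\<K> \<subseteq> insert None (Some ` topspace K)" using KK unfolding OB_def by blast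
      have e: "Some -` \<Union>\<K> = \<Union>((\<lambda>S. Some -` S) ` \<K>)" by auto
      have "openin K (\<Union>((\<lambda>S. Some -` S) ` \<K>))" using KK unfolding OB_def by blast
      then show o: "openin K (Some -` \<Union>\<K>)" using e by simp
      assume "None \<in> \<Union>\<K>"
      then obtain S where S: "S \<in> \<K>" "None \<in> S" by blast
      then have "Some -` S \<in> M" using KK unfolding OB_def by blast
      moreover have "Some -` S \<subseteq> Some -` \<Union>\<K>" using S by blast
      ultimately show "Some -` \<Union>\<K> \<in> M" using M(4) o by blast
    qed
  qed
  define B where "B = topology OB"
  have oB: "openin B S \<longleftrightarrow> OB S" for S unfolding B_def using isT by simp
  have pre: "Some -` insert None (Some ` topspace K) = topspace K" by auto
  have OBfull: "OB (insert None (Some ` topspace K))" unfolding OB_def pre using M(2) by simp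
  have tB: "topspace B = insert None (Some ` topspace K)"
  proof
    show "topspace B \<subseteq> insert None (Some ` topspace K)" unfolding topspace_def oB OB_def by blast
    show "insert None (Some ` topspace K) \<subseteq> topspace B"
      using OBfull oB openin_subset by metis
  qed
  have oBP: "openin B {x \<in> topspace B. P x}" if "openin K {a \<in> topspace K. P (Some a)}"
      "P None \<Longrightarrow> {a \<in> topspace K. P (Some a)} \<in> M" for P
  proof -
    have "Some -` {x \<in> topspace B. P x} = {a \<in> topspace K. P (Some a)}" unfolding tB by auto
    then show ?thesis unfolding oB OB_def tB using that by auto
  qed
  have oBN: "Some -` S \<in> M" if "openin B S" "None \<in> S" for S
    using that unfolding oB OB_def by blast
  have cS: "continuous_map K B Some"
    unfolding continuous_map_def
  proof (intro conjI allI impI)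
    show "Some \<in> topspace K \<rightarrow> topspace B" unfolding tB by auto
    fix S assume "openin B S"
    then have "OB S" using oB by blast
    moreover have "{x \<in> topspace K. Some x \<in> S} = Some -` S" using \<open>OB S\<close> unfolding OB_def by auto
    ultimately show "openin K {x \<in> topspace K. Some x \<in> S}" unfolding OB_def by simp
  qed
  have ciK: "openin K {a \<in> topspace K. i a \<in> U}"
    if H: "continuous_map K X i" "openin X U" for X :: "fpt topology" and i U
    using cmapO[OF H] .
  have L1: "llp K B Some antidiscr pt (\<lambda>_. ())"
    unfolding llp_def
  proof (intro allI impI)
    fix i :: "'k \<Rightarrow> fpt" and j :: "'k option \<Rightarrow> unit"
    assume a: "continuous_map K antidiscr i \<and> continuous_map B pt j \<and> (\<forall>a\<in>topspace K. () = j (Some a))"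
    define h where "h x = (case x of None \<Rightarrow> Pa | Some a \<Rightarrow> i a)" for x
    have im: "\<forall>a\<in>topspace K. i a \<in> {Pa,Pb}" using a unfolding continuous_map_def top_antidiscr by auto
    have "continuous_map B antidiscr h"
      unfolding continuous_map_def top_antidiscr openin_antidiscr
    proof (intro conjI allI impI)
      show "h \<in> topspace B \<rightarrow> {Pa, Pb}" unfolding tB h_def using im by auto
      fix U :: "fpt set" assume "U = {} \<or> U = {Pa, Pb}"
      then show "openin B {x \<in> topspace B. h x \<in> U}"
      proof
        assume "U = {}" then show ?thesis by simp
      next
        assume "U = {Pa,Pb}"
        then have "{x \<in> topspace B. h x \<in> U} = topspace B" unfolding tB h_def using im by auto
        then show ?thesis by simp
      qed
    qed
    then show "\<exists>h. continuous_map B antidiscr h \<and> (\<forall>a\<in>topspace K. h (Some a) = i a) \<and> (\<forall>b\<in>topspace B. () = j b)"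
      unfolding h_def by auto
  qed
  have L2: "llp K B Some sierp pt (\<lambda>_. ())"
    unfolding llp_def
  proof (intro allI impI)
    fix i :: "'k \<Rightarrow> fpt" and j :: "'k option \<Rightarrow> unit"
    assume a: "continuous_map K sierp i \<and> continuous_map B pt j \<and> (\<forall>a\<in>topspace K. () = j (Some a))"
    let ?U = "{a \<in> topspace K. i a \<in> {Pa}}"
    define h where "h x = (case x of None \<Rightarrow> (if ?U \<in> M then Pa else Pb) | Some a \<Rightarrow> i a)" for x
    have im: "\<forall>a\<in>topspace K. i a \<in> {Pa,Pb}" using a unfolding continuous_map_def top_sierp by auto
    have oU: "openin K ?U" using a ciK[of sierp i "{Pa}"] openin_sierp by blast
    have "continuous_map B sierp h"
      unfolding continuous_map_def top_sierp openin_sierp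
    proof (intro conjI allI impI)
      show "h \<in> topspace B \<rightarrow> {Pa, Pb}" unfolding tB h_def using im by auto
      fix U :: "fpt set" assume U: "U = {} \<or> U = {Pa} \<or> U = {Pa, Pb}"
      have e1: "openin B {x \<in> topspace B. h x \<in> {Pa}}"
        by (rule oBP) (use oU in \<open>auto simp: h_def split: if_splits\<close>)
      have e2: "{x \<in> topspace B. h x \<in> {Pa,Pb}} = topspace B" unfolding tB h_def using im by auto
      have e0: "{x \<in> topspace B. h x \<in> {}} = {}" by auto
      show "openin B {x \<in> topspace B. h x \<in> U}" using U
      proof (elim disjE)
        assume "U = {}" then show ?thesis using e0 openin_empty by (simp only:)
      next
        assume "U = {Pa}" then show ?thesis using e1 by (simp only:)
      next
        assume "U = {Pa,Pb}" then show ?thesis using e2 openin_topspace by (simp only:)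
      qed
    qed
    then show "\<exists>h. continuous_map B sierp h \<and> (\<forall>a\<in>topspace K. h (Some a) = i a) \<and> (\<forall>b\<in>topspace B. () = j b)"
      unfolding h_def by auto
  qed
  have L3: "llp K B Some closedpt sierp (\<lambda>x. x)"
    unfolding llp_def
  proof (intro allI impI)
    fix i :: "'k \<Rightarrow> fpt" and j :: "'k option \<Rightarrow> fpt"
    assume a: "continuous_map K closedpt i \<and> continuous_map B sierp j \<and> (\<forall>a\<in>topspace K. i a = j (Some a))"
    have ib: "\<forall>a\<in>topspace K. i a = Pb"
    proof
      fix x assume "x \<in> topspace K"
      then have "i x \<in> topspace closedpt" using cmapD[of K closedpt i x] a by blast
      then show "i x = Pb" by (simp add: top_closedpt)
    qed
    have jS: "\<forall>a\<in>topspace K. j (Some a) = Pb"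
    proof
      fix x assume "x \<in> topspace K"
      then have "i x = j (Some x)" "i x = Pb" using a ib by blast+
      then show "j (Some x) = Pb" by simp
    qed
    have jN: "j None = Pb"
    proof (rule ccontr)
      assume "j None \<noteq> Pb"
      moreover have "None \<in> topspace B" unfolding tB by simp
      then have "j None \<in> topspace sierp" using cmapD[of B sierp j None] a by blast
      then have "j None \<in> {Pa,Pb}" by (simp add: top_sierp)
      ultimately have jNa: "j None = Pa" by auto
      let ?S = "{x \<in> topspace B. j x \<in> {Pa}}"
      have oS: "openin B ?S" using cmapO[of B sierp j "{Pa}"] a openin_sierp by blast
      have nS: "None \<in> ?S" using jNa tB by auto
      have "Some -` ?S \<in> M" using oBN[OF oS nS] .
      moreover have "Some -` ?S = {}" using jS unfolding tB by auto
      ultimately show False using M(5) by metis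
    qed
    have "continuous_map B closedpt (\<lambda>_. Pb)" by (simp add: top_closedpt)
    moreover have "\<forall>b\<in>topspace B. Pb = j b"
    proof
      fix b assume "b \<in> topspace B"
      then have "b = None \<or> (\<exists>a\<in>topspace K. b = Some a)" unfolding tB by blast
      then show "Pb = j b" using jS jN by metis
    qed
    moreover have "\<forall>a\<in>topspace K. Pb = i a" using ib by metis
    ultimately show "\<exists>h. continuous_map B closedpt h \<and> (\<forall>a\<in>topspace K. h (Some a) = i a) \<and> (\<forall>b\<in>topspace B. h b = j b)"
      by blast
  qed
  have L4: "llp K B Some threept pt (\<lambda>_. ())"
    unfolding llp_def
  proof (intro allI impI)
    fix i :: "'k \<Rightarrow> fpt" and j :: "'k option \<Rightarrow> unit"
    assume a: "continuous_map K threept i \<and> continuous_map B pt j \<and> (\<forall>a\<in>topspace K. () = j (Some a))"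
    let ?Ua = "{a \<in> topspace K. i a \<in> {Po,Pa}}"
    let ?Ub = "{a \<in> topspace K. i a \<in> {Po,Pb}}"
    define hN where "hN = (if ?Ua \<in> M \<and> ?Ub \<in> M then Po else if ?Ua \<in> M then Pa else Pb)"
    define h where "h x = (case x of None \<Rightarrow> hN | Some a \<Rightarrow> i a)" for x
    have im: "\<forall>a\<in>topspace K. i a \<in> {Pa,Po,Pb}" using cmapD[of K threept i] a top_threept by blast
    have oUa: "openin K ?Ua" using a ciK[of threept i "{Po,Pa}"] openin_threept by blast
    have oUb: "openin K ?Ub" using a ciK[of threept i "{Po,Pb}"] openin_threept by blast
    have un: "?Ua \<union> ?Ub = topspace K" using im by auto
    have pr: "?Ua \<in> M \<or> ?Ub \<in> M" using M(6) oUa oUb un by blast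
    have eo: "{a \<in> topspace K. i a \<in> {Po}} = ?Ua \<inter> ?Ub" by auto
    have "continuous_map B threept h"
      unfolding continuous_map_def top_threept openin_threept
    proof (intro conjI allI impI)
      show "h \<in> topspace B \<rightarrow> {Pa, Po, Pb}" unfolding tB h_def hN_def using im by auto
      fix U :: "fpt set" assume U: "U = {} \<or> U = {Po} \<or> U = {Po, Pa} \<or> U = {Po, Pb} \<or> U = {Pa, Po, Pb}"
      have 1: "openin B {x \<in> topspace B. h x \<in> {Po}}"
      proof (rule oBP)
        show "openin K {a \<in> topspace K. h (Some a) \<in> {Po}}" using eo oUa oUb by (auto simp: h_def)
        show "{a \<in> topspace K. h (Some a) \<in> {Po}} \<in> M" if "h None \<in> {Po}"
        proof -
          have "?Ua \<in> M" "?Ub \<in> M" using that unfolding h_def hN_def by (auto split: if_splits)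
          then show ?thesis using M(3) eo by (simp add: h_def)
        qed
      qed
      have 2: "openin B {x \<in> topspace B. h x \<in> {Po,Pa}}"
      proof (rule oBP)
        show "openin K {a \<in> topspace K. h (Some a) \<in> {Po,Pa}}" using oUa by (simp add: h_def)
        show "{a \<in> topspace K. h (Some a) \<in> {Po,Pa}} \<in> M" if "h None \<in> {Po,Pa}"
        proof -
          have "?Ua \<in> M" using that unfolding h_def hN_def by (auto split: if_splits)
          then show ?thesis by (simp add: h_def)
        qed
      qed
      have 3: "openin B {x \<in> topspace B. h x \<in> {Po,Pb}}"
      proof (rule oBP)
        show "openin K {a \<in> topspace K. h (Some a) \<in> {Po,Pb}}" using oUb by (simp add: h_def)
        show "{a \<in> topspace K. h (Some a) \<in> {Po,Pb}} \<in> M" if "h None \<in> {Po,Pb}"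
        proof -
          have "?Ub \<in> M" using that pr unfolding h_def hN_def by (auto split: if_splits)
          then show ?thesis by (simp add: h_def)
        qed
      qed
      have 4: "{x \<in> topspace B. h x \<in> {Pa,Po,Pb}} = topspace B" unfolding tB h_def hN_def using im by auto
      have 5: "{x \<in> topspace B. h x \<in> {}} = {}" by auto
      show "openin B {x \<in> topspace B. h x \<in> U}" using U
      proof (elim disjE)
        assume "U = {}" then show ?thesis using 5 openin_empty by (simp only:)
      next
        assume "U = {Po}" then show ?thesis using 1 by (simp only:)
      next
        assume "U = {Po,Pa}" then show ?thesis using 2 by (simp only:)
      next
        assume "U = {Po,Pb}" then show ?thesis using 3 by (simp only:)
      next
        assume "U = {Pa,Po,Pb}" then show ?thesis using 4 openin_topspace by (simp only:)
      qed
    qed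
    then show "\<exists>h. continuous_map B threept h \<and> (\<forall>a\<in>topspace K. h (Some a) = i a) \<and> (\<forall>b\<in>topspace B. () = j b)"
      unfolding h_def by auto
  qed
  have "in_CT_l K B Some" unfolding in_CT_l_def using cS L1 L2 L3 L4 by blast
  then have "llp K B Some K pt (\<lambda>_. ())" using H unfolding in_CT_lr_def by blast
  moreover have "continuous_map K K (\<lambda>x. x)" by simp
  moreover have "continuous_map B pt (\<lambda>_. ())" by (simp add: top_pt)
  moreover have "\<forall>a\<in>topspace K. (\<lambda>_. ()) a = (\<lambda>_. ()) (Some a)" by simp
  ultimately obtain h where h: "continuous_map B K h" "\<forall>a\<in>topspace K. h (Some a) = a"
    using llpD by blast
  have NB: "None \<in> topspace B" unfolding tB by simp
  then have hk: "h None \<in> topspace K" using h(1) unfolding continuous_map_def by blast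
  then obtain V where V: "openin K V" "h None \<in> V" "V \<notin> M" using M(7) by blast
  let ?S = "{x \<in> topspace B. h x \<in> V}"
  have "openin B ?S" using h(1) V(1) unfolding continuous_map_def by blast
  moreover have "None \<in> ?S" using NB V by simp
  ultimately have "Some -` ?S \<in> M" using oBN by blast
  moreover have "Some -` ?S = V" using h(2) openin_subset[OF V(1)] unfolding tB by auto
  ultimately show False using V(3) by simp
qed

theorem claim1:
  fixes K :: "'k topology"
  assumes "Hausdorff_space K"
  shows "(compact_space K \<longrightarrow> in_CT_lr TYPE('a) TYPE('b) K pt (\<lambda>_. ()))
       \<and> (in_CT_lr TYPE('k) TYPE('k option) K pt (\<lambda>_. ()) \<longrightarrow> compact_space K)"
proof (intro conjI impI)
  assume c: "compact_space K"
  show "in_CT_lr TYPE('a) TYPE('b) K pt (\<lambda>_. ())"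
    unfolding in_CT_lr_def
  proof (intro conjI allI impI)
    show "continuous_map K pt (\<lambda>_. ())" by (simp add: top_pt)
    fix A :: "'a topology" and B :: "'b topology" and f
    assume f: "in_CT_l A B f"
    show "llp A B f K pt (\<lambda>_. ())"
      unfolding llp_def
    proof (intro allI impI)
      fix i j assume "continuous_map A K i \<and> continuous_map B pt j \<and> (\<forall>a\<in>topspace A. () = j (f a))"
      then obtain h where "continuous_map B K h" "\<forall>a\<in>topspace A. h (f a) = i a"
        using ext_lem[OF c assms f] by blast
      then show "\<exists>h. continuous_map B K h \<and> (\<forall>a\<in>topspace A. h (f a) = i a) \<and> (\<forall>b\<in>topspace B. () = j b)"
        by auto
    qed
  qed
next
  assume "in_CT_lr TYPE('k) TYPE('k option) K pt (\<lambda>_. ())"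
  then show "compact_space K" by (rule dir2)
qed


end
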